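(* Let $\alpha>0$, let $W$ be a standard Brownian motion, and let $X$ solve $dX_t=-\alpha X_t\,dt+dW_t$, $X_0=0$. Let $X^*_t=\sup_{0\le s\le t}|X_s|$. There exists a function $\phi:\mathbb{R}_+\to\mathbb{R}_+$ satisfying $\phi(\delta)\to0$ as $\delta\to0$ such that for any $t\ge1$ and $\delta>0$, \[ \mathbb{P}\big(X^*_t<\delta\log^{1/2}t\big)\le \phi(\delta). \] *)

theory Defs
  imports "HOL-Probability.Probability"
begin

definition brownian_motion :: "'a measure \<Rightarrow> (real \<Rightarrow> 'a \<Rightarrow> real) \<Rightarrow> bool" where
  "brownian_motion M W \<longleftrightarrow>
     prob_space M \<and>
     (\<forall>\<omega>\<in>space M. W 0 \<omega> = 0) \<and>
     (\<forall>\<omega>\<in>space M. continuous_on {0..} (\<lambda>t. W t \<omega>)) \<and>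
     (\<forall>s t. 0 \<le> s \<and> s < t \<longrightarrow>
        distributed M lborel (\<lambda>\<omega>. W t \<omega> - W s \<omega>) (normal_density 0 (sqrt (t - s)))) \<and>
     (\<forall>ts :: real list. sorted ts \<and> (\<forall>t\<in>set ts. 0 \<le> t) \<longrightarrow>
        prob_space.indep_vars M (\<lambda>_. borel)
          (\<lambda>i \<omega>. W (ts ! Suc i) \<omega> - W (ts ! i) \<omega>) {..<length ts - 1})"

definition running_abs_max :: "(real \<Rightarrow> 'a \<Rightarrow> real) \<Rightarrow> real \<Rightarrow> 'a \<Rightarrow> real" where
  "running_abs_max X t \<omega> = (SUP s\<in>{0..t}. \<bar>X s \<omega>\<bar>)"

end

theory Submission
  imports Defs
begin


lemma snd_upper: "std_normal_density x \<le> 1/2"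
proof -
  have "2 \<le> sqrt (2*pi)" using pi_gt3 by (simp add: real_le_rsqrt)
  hence "1 / sqrt (2*pi) \<le> 1/2" by (simp add: field_simps)
  moreover have "exp (- x\<^sup>2 / 2) \<le> 1" by simp
  ultimately show ?thesis unfolding std_normal_density_def
    using mult_mono[of "1 / sqrt (2*pi)" "1/2" "exp (- x\<^sup>2 / 2)" 1] by simp
qed

lemma snd_lower:
  assumes "0 \<le> a" "a \<le> x" "x \<le> a + 1"
  shows "exp (- a\<^sup>2) / 9 \<le> std_normal_density x"
proof -
  have "sqrt (2*pi) \<le> 3" using pi_less_4 by (simp add: real_sqrt_le_iff real_le_lsqrt)
  hence c: "1/3 \<le> 1 / sqrt (2*pi)" by (simp add: field_simps)
  have "x\<^sup>2 \<le> (a+1)\<^sup>2" using assms by (simp add: power_mono)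
  also have "\<dots> \<le> 2*a\<^sup>2 + 2" using zero_le_square[of "a-1"] by (simp add: power2_eq_square algebra_simps)
  finally have "- a\<^sup>2 - 1 \<le> - x\<^sup>2 / 2" by simp
  hence e1: "exp (- a\<^sup>2 - 1) \<le> exp (- x\<^sup>2 / 2)" by simp
  have "exp (- a\<^sup>2 - 1) = exp (- a\<^sup>2) / exp 1" by (simp add: exp_diff)
  moreover have "exp (- a\<^sup>2) / 3 \<le> exp (- a\<^sup>2) / exp 1"
    using exp_le by (intro divide_left_mono) auto
  ultimately have e2: "exp (- a\<^sup>2) / 3 \<le> exp (- x\<^sup>2 / 2)" using e1 by linarith
  have "exp (- a\<^sup>2) / 9 = (1/3) * (exp (- a\<^sup>2) / 3)" by simp
  also have "\<dots> \<le> (1 / sqrt (2*pi)) * exp (- x\<^sup>2 / 2)"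
    using c e2 by (intro mult_mono) auto
  finally show ?thesis unfolding std_normal_density_def .
qed



lemma snd_upper': "std_normal_density x * 2 \<le> 1" using snd_upper[of x] by linarith
lemma snd_lower': "0 \<le> a \<Longrightarrow> a < x \<Longrightarrow> x \<le> a + 1 \<Longrightarrow> exp (- a\<^sup>2) \<le> std_normal_density x * 9"
  using snd_lower[of a x] by linarith

lemma normal_upper:
  assumes P: "prob_space M" and D: "distributed M lborel Y (normal_density 0 1)" and a: "0 \<le> a"
  shows "measure M {\<omega>\<in>space M. \<bar>Y \<omega>\<bar> \<le> a} \<le> a"
proof -
  interpret prob_space M by fact
  have S: "{\<omega>\<in>space M. \<bar>Y \<omega>\<bar> \<le> a} = Y -` {-a..a} \<inter> space M" by auto
  have "emeasure M (Y -` {-a..a} \<inter> space M) = (\<integral>\<^sup>+x. ennreal (std_normal_density x) * indicator {-a..a} x \<partial>lborel)"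
    by (rule distributed_emeasure[OF D]) simp
  also have "\<dots> \<le> (\<integral>\<^sup>+x. ennreal (1/2) * indicator {-a..a} x \<partial>lborel)"
    by (intro nn_integral_mono mult_right_mono ennreal_leI) (auto simp: snd_upper')
  also have "\<dots> = ennreal (1/2) * ennreal (a - - a)"
    using a by (subst nn_integral_cmult_indicator) auto
  also have "\<dots> = ennreal ((1/2) * (a - - a))" using a by (subst ennreal_mult) auto
  also have "\<dots> = ennreal a" by simp
  finally have "ennreal (measure M (Y -` {-a..a} \<inter> space M)) \<le> ennreal a"
    by (simp add: emeasure_eq_measure)
  thus ?thesis using a S by simp
qed

lemma normal_upper2:
  assumes P: "prob_space M" and D: "distributed M lborel Y (normal_density 0 1)" and a: "0 \<le> a"
  shows "measure M {\<omega>\<in>space M. \<bar>Y \<omega>\<bar> \<le> a} \<le> 1 - exp (- a\<^sup>2) / 9"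
proof -
  interpret prob_space M by fact
  have Ym: "Y \<in> borel_measurable M" using distributed_measurable[OF D] by simp
  have S: "{\<omega>\<in>space M. \<bar>Y \<omega>\<bar> \<le> a} = Y -` {-a..a} \<inter> space M" by auto
  have "ennreal (exp (- a\<^sup>2) / 9) = (\<integral>\<^sup>+x. ennreal (exp (- a\<^sup>2) / 9) * indicator {a<..a+1} x \<partial>lborel)"
    by (subst nn_integral_cmult_indicator) auto
  also have "\<dots> \<le> (\<integral>\<^sup>+x. ennreal (std_normal_density x) * indicator {a<..a+1} x \<partial>lborel)"
    using a by (intro nn_integral_mono) (auto simp: indicator_def intro!: ennreal_leI snd_lower')
  also have "\<dots> = emeasure M (Y -` {a<..a+1} \<inter> space M)"
    by (rule distributed_emeasure[OF D, symmetric]) simp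
  finally have L: "exp (- a\<^sup>2) / 9 \<le> measure M (Y -` {a<..a+1} \<inter> space M)"
    by (simp add: emeasure_eq_measure)
  have disj: "(Y -` {-a..a} \<inter> space M) \<inter> (Y -` {a<..a+1} \<inter> space M) = {}" by auto
  have "measure M (Y -` {-a..a} \<inter> space M) + measure M (Y -` {a<..a+1} \<inter> space M)
      = measure M ((Y -` {-a..a} \<inter> space M) \<union> (Y -` {a<..a+1} \<inter> space M))"
    using disj Ym by (intro finite_measure_Union[symmetric]) auto
  also have "\<dots> \<le> 1" by simp
  finally show ?thesis unfolding S using L by linarith
qed



lemma path_incl:
  fixes x w :: "real \<Rightarrow> real"
  assumes cont: "continuous_on {0..} x"
    and eq: "\<forall>t\<ge>0. x t = - \<alpha> * integral {0..t} x + w t"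
    and u: "0 \<le> u" "u + 1 \<le> t" and sup: "(SUP s\<in>{0..t}. \<bar>x s\<bar>) < c" and al: "\<alpha> \<ge> 0"
  shows "\<bar>w (u+1) - w u\<bar> \<le> (2+\<alpha>)*c"
proof -
  have ct: "continuous_on {0..t} x" using cont by (rule continuous_on_subset) auto
  have "compact ((\<lambda>s. \<bar>x s\<bar>) ` {0..t})"
    by (intro compact_continuous_image continuous_intros ct) auto
  hence bdd: "bdd_above ((\<lambda>s. \<bar>x s\<bar>) ` {0..t})"
    by (intro bounded_imp_bdd_above compact_imp_bounded)
  have xb: "\<bar>x s\<bar> < c" if "s \<in> {0..t}" for s
    using cSUP_upper[OF that bdd] sup by linarith
  have c0: "0 \<le> c" using xb[of 0] u by fastforce
  have wv: "w v = x v + \<alpha> * integral {0..v} x" if "v \<ge> 0" for v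
    using eq that by auto
  have int: "x integrable_on {0..u+1}"
    by (intro integrable_continuous_interval continuous_on_subset[OF ct]) (use u in auto)
  have comb: "integral {0..u} x + integral {u..u+1} x = integral {0..u+1} x"
    using Henstock_Kurzweil_Integration.integral_combine[OF _ _ int, of u] u by auto
  have ib: "norm (integral {u..u+1} x) \<le> c * ((u+1) - u)"
    by (rule integral_bound) (use u xb in \<open>auto intro: continuous_on_subset[OF ct] less_imp_le\<close>)
  have "w (u+1) - w u = x (u+1) - x u + \<alpha> * integral {u..u+1} x"
    using wv[of u] wv[of "u+1"] u comb[symmetric] by (simp add: distrib_left)
  moreover have "\<bar>x (u+1)\<bar> \<le> c" "\<bar>x u\<bar> \<le> c" using xb u by (auto intro: less_imp_le)
  moreover have "\<bar>\<alpha> * integral {u..u+1} x\<bar> \<le> \<alpha> * c"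
    using ib al by (simp add: abs_mult mult_left_mono)
  ultimately show ?thesis by (simp add: algebra_simps)
qed



definition Gf :: "real \<Rightarrow> real \<Rightarrow> real \<Rightarrow> real" where
  "Gf K \<delta> t = (min (K*\<delta> * sqrt(ln t)) (1 - exp(-(K*\<delta> * sqrt(ln t))\<^sup>2)/9))^(nat\<lfloor>t\<rfloor>)"

lemma nat_floor_ge: assumes "1 \<le> t" shows "1 \<le> nat \<lfloor>t\<rfloor>" "t \<le> 2 * real (nat \<lfloor>t\<rfloor>)"
proof -
  have f1: "1 \<le> \<lfloor>t\<rfloor>" using assms by linarith
  have "t < real_of_int \<lfloor>t\<rfloor> + 1" by linarith
  have r: "real (nat \<lfloor>t\<rfloor>) = real_of_int \<lfloor>t\<rfloor>" using f1 by simp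
  show "1 \<le> nat \<lfloor>t\<rfloor>" using f1 by (simp add: le_nat_iff)
  show "t \<le> 2 * real (nat \<lfloor>t\<rfloor>)" unfolding r using f1 \<open>t < _\<close> by linarith
qed

lemma Gf_large:
  assumes K: "K > 0" and d: "0 < \<delta>" "K*\<delta> \<le> 1/2" and t: "1 \<le> t"
  shows "Gf K \<delta> t \<le> exp (- sqrt t / 18)"
proof -
  define a where "a = K*\<delta> * sqrt(ln t)"
  define n where "n = nat\<lfloor>t\<rfloor>"
  have lt: "0 \<le> ln t" using t by simp
  have a0: "0 \<le> a" unfolding a_def using K d lt by simp
  have "a\<^sup>2 = (K*\<delta>)\<^sup>2 * ln t" unfolding a_def using lt by (simp add: power_mult_distrib)
  also have "\<dots> \<le> (1/2)\<^sup>2 * ln t" using K d lt by (intro mult_right_mono power_mono) auto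
  also have "\<dots> \<le> ln t / 2" using lt by (simp add: power2_eq_square)
  finally have "- (ln t / 2) \<le> - a\<^sup>2" by simp
  hence "exp (- (ln t / 2)) \<le> exp (- a\<^sup>2)" by simp
  moreover have "exp (- (ln t / 2)) = 1 / sqrt t"
    using t by (simp add: exp_minus powr_half_sqrt[symmetric] powr_def field_simps)
  ultimately have e: "1 / sqrt t \<le> exp (- a\<^sup>2)" by simp
  have st: "0 < sqrt t" using t by simp
  define b where "b = 1 / (9 * sqrt t)"
  have s1: "1 \<le> sqrt t" using t by simp
  have b0: "0 \<le> b" "b \<le> 1" unfolding b_def using st s1
    by (auto simp: field_simps simp del: real_sqrt_ge_1_iff)
  have "b = (1 / sqrt t) / 9" unfolding b_def by simp
  hence "b \<le> exp(-a\<^sup>2)/9" using e by simp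
  hence m: "min a (1 - exp(-a\<^sup>2)/9) \<le> 1 - b" by linarith
  have m0: "0 \<le> min a (1 - exp(-a\<^sup>2)/9)"
    using a0 by (simp add: exp_le_one_iff) (smt (verit) exp_le_one_iff zero_le_power2 neg_le_0_iff_le)
  have "Gf K \<delta> t = (min a (1 - exp(-a\<^sup>2)/9))^n" unfolding Gf_def a_def n_def ..
  also have "\<dots> \<le> (1 - b)^n" using m m0 by (intro power_mono) auto
  also have "\<dots> \<le> exp (- b)^n" using b0 by (intro power_mono) (auto simp: exp_ge_add_one_self_aux order_trans[OF _ exp_ge_add_one_self] )
  also have "\<dots> = exp (- (b * n))" by (simp add: exp_of_nat_mult[symmetric] mult.commute)
  also have "\<dots> \<le> exp (- sqrt t / 18)"
  proof -
    have "t \<le> 2 * real n" using nat_floor_ge[OF t] n_def by simp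
    hence "sqrt t / 18 \<le> b * n"
      unfolding b_def using st by (simp add: field_simps)
    thus ?thesis by simp
  qed
  finally show ?thesis .
qed

lemma Gf_small:
  assumes K: "K > 0" and d: "0 < \<delta>" and t: "1 \<le> t" and a1: "K*\<delta> * sqrt(ln t) \<le> 1"
  shows "Gf K \<delta> t \<le> K*\<delta> * sqrt(ln t)"
proof -
  define a where "a = K*\<delta> * sqrt(ln t)"
  have a0: "0 \<le> a" unfolding a_def using K d t by simp
  define m where "m = min a (1 - exp(-a\<^sup>2)/9)"
  have m0: "0 \<le> m" unfolding m_def
    using a0 by (simp add: exp_le_one_iff) (smt (verit) exp_le_one_iff zero_le_power2 neg_le_0_iff_le)
  have ma: "m \<le> a" unfolding m_def by simp
  have n1: "1 \<le> nat \<lfloor>t\<rfloor>" using nat_floor_ge[OF t] by simp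
  have "Gf K \<delta> t = m ^ nat \<lfloor>t\<rfloor>" unfolding Gf_def m_def a_def ..
  also have "\<dots> \<le> m ^ 1" using m0 ma a1 n1 unfolding a_def by (intro power_decreasing) auto
  finally show ?thesis using ma unfolding a_def by simp
qed

lemma Gf_lim:
  assumes K: "K > 0" and e: "0 < \<epsilon>" "\<epsilon> < 1"
  shows "\<exists>\<delta>0>0. \<forall>\<delta> (t::real). 0 < \<delta> \<and> \<delta> < \<delta>0 \<and> 1 \<le> t \<longrightarrow> Gf K \<delta> t \<le> \<epsilon>"
proof -
  define L where "L = - ln \<epsilon>"
  have L0: "0 \<le> L" unfolding L_def using e by simp
  define T where "T = (18 * L)\<^sup>2 + 1"
  have T1: "1 \<le> T" unfolding T_def by simp
  define C where "C = K * sqrt (ln T) + 1"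
  have C1: "1 \<le> C" unfolding C_def using K T1 by simp
  define \<delta>0 where "\<delta>0 = min (1/(2*K)) (\<epsilon> / C)"
  have d0: "\<delta>0 > 0" unfolding \<delta>0_def using K e C1 by simp
  show ?thesis
  proof (intro exI[of _ \<delta>0] conjI d0 allI impI)
    fix \<delta> and t :: real assume h: "0 < \<delta> \<and> \<delta> < \<delta>0 \<and> 1 \<le> t"
    hence d: "0 < \<delta>" "\<delta> < \<delta>0" and t: "1 \<le> t" by auto
    show "Gf K \<delta> t \<le> \<epsilon>"
    proof (cases "T \<le> t")
      case True
      have "K * \<delta> \<le> K * (1/(2*K))" using d \<delta>0_def K by (intro mult_left_mono) auto
      hence Kd: "K * \<delta> \<le> 1/2" using K by simp
      have "18 * L \<le> sqrt t"
        using True L0 unfolding T_def by (intro real_le_rsqrt) auto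
      hence "- sqrt t / 18 \<le> ln \<epsilon>" unfolding L_def by simp
      hence "exp (- sqrt t / 18) \<le> exp (ln \<epsilon>)" by simp
      also have "\<dots> = \<epsilon>" using e by simp
      finally show ?thesis using Gf_large[OF K d(1) Kd t] by linarith
    next
      case False
      have "sqrt (ln t) \<le> sqrt (ln T)" using False t by simp
      hence "K*\<delta> * sqrt(ln t) \<le> K*\<delta> * sqrt(ln T)" using K d by (intro mult_left_mono) auto
      also have "\<dots> \<le> \<delta> * C" unfolding C_def using d by (simp add: algebra_simps)
      also have "\<dots> \<le> (\<epsilon> / C) * C" using d C1 \<delta>0_def by (intro mult_right_mono) auto
      also have "\<dots> = \<epsilon>" using C1 by simp
      finally have a: "K*\<delta> * sqrt(ln t) \<le> \<epsilon>" .
      show ?thesis using Gf_small[OF K d(1) t] a e by linarith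
    qed
  qed
qed



lemma block_prob:
  assumes BM: "brownian_motion M W" and n: "1 \<le> n" and a: "0 \<le> a"
  shows "measure M {\<omega>\<in>space M. \<forall>k<n. \<bar>W (real k + 1) \<omega> - W (real k) \<omega>\<bar> \<le> a}
           \<le> (min a (1 - exp(-a\<^sup>2)/9))^n \<and>
         {\<omega>\<in>space M. \<forall>k<n. \<bar>W (real k + 1) \<omega> - W (real k) \<omega>\<bar> \<le> a} \<in> sets M"
proof -
  have P: "prob_space M" using BM unfolding brownian_motion_def by simp
  interpret prob_space M by fact
  define ts where "ts = map real [0..<Suc n]"
  have len: "length ts - 1 = n" unfolding ts_def by simp
  have srt: "sorted ts" unfolding ts_def by (simp add: sorted_map mono_def del: upt_Suc)
  have pos: "\<forall>t\<in>set ts. 0 \<le> t" unfolding ts_def by auto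
  define Z where "Z = (\<lambda>i \<omega>. W (ts ! Suc i) \<omega> - W (ts ! i) \<omega>)"
  have BMi: "\<forall>ts :: real list. sorted ts \<and> (\<forall>t\<in>set ts. 0 \<le> t) \<longrightarrow>
        indep_vars (\<lambda>_. borel) (\<lambda>i \<omega>. W (ts ! Suc i) \<omega> - W (ts ! i) \<omega>) {..<length ts - 1}"
    using BM unfolding brownian_motion_def by blast
  have IV0: "indep_vars (\<lambda>_. borel) Z {..<length ts - 1}"
    unfolding Z_def using BMi srt pos by blast
  have IV: "indep_vars (\<lambda>_. borel) Z {..<n}" using IV0 unfolding len .
  have Zi: "Z i = (\<lambda>\<omega>. W (real i + 1) \<omega> - W (real i) \<omega>)" if "i < n" for i
    using that unfolding Z_def ts_def by (simp add: nth_append add.commute del: upt_Suc)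
  have D: "distributed M lborel (\<lambda>\<omega>. W (real i + 1) \<omega> - W (real i) \<omega>) (normal_density 0 1)" for i
  proof -
    have BMd: "\<forall>s t. 0 \<le> s \<and> s < t \<longrightarrow>
        distributed M lborel (\<lambda>\<omega>. W t \<omega> - W s \<omega>) (normal_density 0 (sqrt (t - s)))"
      using BM unfolding brownian_motion_def by blast
    have "distributed M lborel (\<lambda>\<omega>. W (real i + 1) \<omega> - W (real i) \<omega>) (normal_density 0 (sqrt (real i + 1 - real i)))"
      using BMd[rule_format, of "real i" "real i + 1"] by simp
    thus ?thesis by simp
  qed
  define A where "A i = Z i -` {-a..a} \<inter> space M" for i
  have IS: "indep_sets (\<lambda>i. {Z i -` B \<inter> space M | B. B \<in> sets borel}) {..<n}"
    using IV unfolding indep_vars_def2 by simp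
  have "prob (\<Inter>i\<in>{..<n}. A i) = (\<Prod>i\<in>{..<n}. prob (A i))"
    using n by (intro indep_setsD[OF IS]) (auto simp: A_def lessThan_empty_iff)
  moreover have "(\<Inter>i\<in>{..<n}. A i) \<in> sets M"
  proof (intro sets.finite_INT)
    show "{..<n} \<noteq> {}" using n by (auto simp: lessThan_empty_iff)
    fix i assume "i \<in> {..<n}"
    hence "Z i \<in> borel_measurable M" using IV unfolding indep_vars_def2 by auto
    thus "A i \<in> sets M" unfolding A_def by (intro measurable_sets) auto
  qed simp
  moreover have "{\<omega>\<in>space M. \<forall>k<n. \<bar>W (real k + 1) \<omega> - W (real k) \<omega>\<bar> \<le> a} = (\<Inter>i\<in>{..<n}. A i)"
  proof (intro set_eqI iffI)
    fix \<omega> assume "\<omega> \<in> {\<omega>\<in>space M. \<forall>k<n. \<bar>W (real k + 1) \<omega> - W (real k) \<omega>\<bar> \<le> a}"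
    thus "\<omega> \<in> (\<Inter>i\<in>{..<n}. A i)" by (auto simp: A_def Zi abs_le_iff)
  next
    fix \<omega> assume h: "\<omega> \<in> (\<Inter>i\<in>{..<n}. A i)"
    hence "\<omega> \<in> A 0" using n by auto
    hence "\<omega> \<in> space M" by (simp add: A_def)
    moreover have "\<bar>W (real k + 1) \<omega> - W (real k) \<omega>\<bar> \<le> a" if "k < n" for k
    proof -
      have "\<omega> \<in> A k" using h that by blast
      thus ?thesis using that by (simp add: A_def Zi abs_le_iff)
    qed
    ultimately show "\<omega> \<in> {\<omega>\<in>space M. \<forall>k<n. \<bar>W (real k + 1) \<omega> - W (real k) \<omega>\<bar> \<le> a}" by auto
  qed
  moreover have "prob (A i) \<le> min a (1 - exp(-a\<^sup>2)/9)" if "i < n" for i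
  proof -
    have "A i = {\<omega>\<in>space M. \<bar>W (real i + 1) \<omega> - W (real i) \<omega>\<bar> \<le> a}"
      unfolding A_def Zi[OF that] by auto
    thus ?thesis using normal_upper[OF P D a] normal_upper2[OF P D a] by simp
  qed
  ultimately show ?thesis
    using prod_mono[of "{..<n}" "\<lambda>i. prob (A i)" "\<lambda>_. min a (1 - exp(-a\<^sup>2)/9)"]
    by simp
qed



lemma Gf_bounds:
  assumes "K > 0" "0 < \<delta>" "1 \<le> t" shows "0 \<le> Gf K \<delta> t" "Gf K \<delta> t \<le> 1"
proof -
  define a where "a = K*\<delta> * sqrt(ln t)"
  have a0: "0 \<le> a" unfolding a_def using assms by simp
  define m where "m = min a (1 - exp(-a\<^sup>2)/9)"
  have m0: "0 \<le> m" unfolding m_def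
    using a0 by (simp add: exp_le_one_iff) (smt (verit) exp_le_one_iff zero_le_power2 neg_le_0_iff_le)
  have ep: "0 < exp(-a\<^sup>2)" by simp
  have "m \<le> 1 - exp(-a\<^sup>2)/9" unfolding m_def by simp
  hence m1: "m \<le> 1" using ep by linarith
  have "Gf K \<delta> t = m ^ nat \<lfloor>t\<rfloor>" unfolding Gf_def m_def a_def ..
  thus "0 \<le> Gf K \<delta> t" "Gf K \<delta> t \<le> 1" using m0 m1 by (auto intro: power_le_one)
qed

theorem lemma3p1:
  fixes M :: "'a measure" and W X :: "real \<Rightarrow> 'a \<Rightarrow> real" and \<alpha> :: real
  assumes "\<alpha> > 0"
    and "brownian_motion M W"
    and "\<forall>\<omega>\<in>space M. continuous_on {0..} (\<lambda>t. X t \<omega>)"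
    and "\<forall>\<omega>\<in>space M. \<forall>t\<ge>0.
           X t \<omega> = - \<alpha> * integral {0..t} (\<lambda>s. X s \<omega>) + W t \<omega>"
  shows "\<exists>\<phi> :: real \<Rightarrow> real.
           (\<forall>\<delta>>0. \<phi> \<delta> \<ge> 0) \<and>
           (\<phi> \<longlongrightarrow> 0) (at_right 0) \<and>
           (\<forall>t\<ge>1. \<forall>\<delta>>0.
              measure M {\<omega>\<in>space M. running_abs_max X t \<omega> < \<delta> * sqrt (ln t)} \<le> \<phi> \<delta>)"
proof -
  note al = assms(1) and BM = assms(2) and cont = assms(3) and eq = assms(4)
  have P: "prob_space M" using BM unfolding brownian_motion_def by simp
  interpret prob_space M by fact
  define K where "K = 2 + \<alpha>"
  have K: "K > 0" unfolding K_def using al by simp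
  define \<phi> where "\<phi> \<delta> = (SUP t\<in>{1..}. Gf K \<delta> t)" for \<delta>
  have bdd: "bdd_above ((\<lambda>t. Gf K \<delta> t) ` {1..})" if "0 < \<delta>" for \<delta>
    using Gf_bounds(2)[OF K that] by (intro bdd_aboveI[of _ 1]) auto
  have up: "Gf K \<delta> t \<le> \<phi> \<delta>" if "0 < \<delta>" "1 \<le> t" for \<delta> t
    unfolding \<phi>_def using that by (intro cSUP_upper bdd) auto
  have nn: "0 \<le> \<phi> \<delta>" if "0 < \<delta>" for \<delta>
    using up[OF that order_refl] Gf_bounds(1)[OF K that order_refl] by linarith
  show ?thesis
  proof (intro exI[of _ \<phi>] conjI allI impI)
    fix \<delta> :: real assume "0 < \<delta>" thus "0 \<le> \<phi> \<delta>" by (rule nn)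
  next
    show "(\<phi> \<longlongrightarrow> 0) (at_right 0)"
    proof (rule order_tendstoI)
      fix a :: real assume "a < 0"
      have aphi: "a < \<phi> \<delta>" if "0 < \<delta>" for \<delta> using nn[OF that] \<open>a < 0\<close> by linarith
      show "\<forall>\<^sub>F \<delta> in at_right 0. a < \<phi> \<delta>"
        by (rule eventually_mono[OF eventually_at_right_less[of "0::real"] aphi])
    next
      fix e :: real assume e: "0 < e"
      define \<epsilon> where "\<epsilon> = min (e/2) (1/2)"
      have e1: "0 < \<epsilon>" "\<epsilon> < 1" "\<epsilon> < e" unfolding \<epsilon>_def using e by auto
      obtain \<delta>0 where d0: "\<delta>0 > 0"
        and H: "\<forall>\<delta> (t::real). 0 < \<delta> \<and> \<delta> < \<delta>0 \<and> 1 \<le> t \<longrightarrow> Gf K \<delta> t \<le> \<epsilon>"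
        using Gf_lim[OF K e1(1) e1(2)] by blast
      have "\<phi> \<delta> \<le> \<epsilon>" if "0 < \<delta>" "\<delta> < \<delta>0" for \<delta>
        unfolding \<phi>_def using H that by (intro cSUP_least) auto
      hence "\<phi> \<delta> < e" if "0 < \<delta>" "\<delta> < \<delta>0" for \<delta> using that e1(3) by fastforce
      thus "\<forall>\<^sub>F \<delta> in at_right 0. \<phi> \<delta> < e"
        unfolding eventually_at_right_field using d0 by blast
    qed
  next
    fix t \<delta> :: real assume t: "1 \<le> t" and d: "0 < \<delta>"
    define n where "n = nat \<lfloor>t\<rfloor>"
    have n1: "1 \<le> n" using nat_floor_ge[OF t] n_def by simp
    have nt: "real n \<le> t" unfolding n_def using t by (simp add: of_nat_nat)
    define a where "a = K*\<delta> * sqrt(ln t)"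
    have a0: "0 \<le> a" unfolding a_def using K d t by simp
    define B where "B = {\<omega>\<in>space M. \<forall>k<n. \<bar>W (real k + 1) \<omega> - W (real k) \<omega>\<bar> \<le> a}"
    have BP: "measure M B \<le> (min a (1 - exp(-a\<^sup>2)/9))^n" "B \<in> sets M"
      unfolding B_def using block_prob[OF BM n1 a0] by blast+
    have sub: "{\<omega>\<in>space M. running_abs_max X t \<omega> < \<delta> * sqrt (ln t)} \<subseteq> B"
    proof
      fix \<omega> assume h: "\<omega> \<in> {\<omega>\<in>space M. running_abs_max X t \<omega> < \<delta> * sqrt (ln t)}"
      hence sp: "\<omega> \<in> space M" by simp
      have "\<bar>W (real k + 1) \<omega> - W (real k) \<omega>\<bar> \<le> a" if "k < n" for k
      proof -
        have kt: "real k + 1 \<le> t" using that nt by linarith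
        have c1: "continuous_on {0..} (\<lambda>s. X s \<omega>)" using cont sp by blast
        have e1: "\<forall>t\<ge>0. X t \<omega> = - \<alpha> * integral {0..t} (\<lambda>s. X s \<omega>) + W t \<omega>" using eq sp by blast
        have s1: "(SUP s\<in>{0..t}. \<bar>X s \<omega>\<bar>) < \<delta> * sqrt (ln t)"
          using h unfolding running_abs_max_def by simp
        have "\<bar>W (real k + 1) \<omega> - W (real k) \<omega>\<bar> \<le> (2+\<alpha>) * (\<delta> * sqrt (ln t))"
          by (rule path_incl[OF c1 e1 _ _ s1]) (use al kt in auto)
        thus ?thesis unfolding a_def K_def by (simp add: mult.assoc)
      qed
      thus "\<omega> \<in> B" unfolding B_def using sp by auto
    qed
    have "measure M {\<omega>\<in>space M. running_abs_max X t \<omega> < \<delta> * sqrt (ln t)} \<le> measure M B"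
      by (rule finite_measure_mono[OF sub BP(2)])
    also have "\<dots> \<le> Gf K \<delta> t" using BP(1) unfolding Gf_def a_def n_def .
    also have "\<dots> \<le> \<phi> \<delta>" by (rule up[OF d t])
    finally show "measure M {\<omega>\<in>space M. running_abs_max X t \<omega> < \<delta> * sqrt (ln t)} \<le> \<phi> \<delta>" .
  qed
qed


end
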